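(* Let $k\ge 0$ be an integer and $p\in(1,\infty)$. For every $f\in W^{k+2,p}(0,\infty)$, \[ \|(If)'\|_{W^{k,p}}\le C_{k,p}\,\|f''\|_{W^{k,p}}\le C_{k,p}\|f\|_{W^{k+2,p}}, \] where $C_{k,p}$ depends only on $k$ and $p$.
   Context: All functions are defined on $[0,\infty)$ and $L^p=L^p(0,\infty)$. For an integer $k\ge0$, $\|f\|_{W^{k,p}}=\sum_{j=0}^{k}\|f^{(j)}\|_{L^p}$. For a function $f$ which is $C^1$ up to $0$, \[ If(x)=\int_0^x\frac{f(y)-f(0)-yf'(0)}{y^2}\,dy . \] *)

theory Defs
  imports "HOL-Analysis.Analysis"
begin

definition in_Lp :: "real \<Rightarrow> (real \<Rightarrow> real) \<Rightarrow> bool" where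
  "in_Lp p g \<longleftrightarrow> set_borel_measurable lborel {0<..} g \<and>
     set_integrable lborel {0<..} (\<lambda>x. \<bar>g x\<bar> powr p)"

definition Lp_norm :: "real \<Rightarrow> (real \<Rightarrow> real) \<Rightarrow> real" where
  "Lp_norm p g = (LINT x:{0<..}|lborel. \<bar>g x\<bar> powr p) powr (1 / p)"

text \<open>F is a W^{m,p}(0,infinity) function together with its derivatives:
  F 0 is the function, F j its j-th (weak) derivative, represented by the
  continuous-up-to-0 (locally absolutely continuous) representatives for j < m.\<close>
definition sobolev :: "nat \<Rightarrow> real \<Rightarrow> (nat \<Rightarrow> real \<Rightarrow> real) \<Rightarrow> bool" where
  "sobolev m p F \<longleftrightarrow> (\<forall>j\<le>m. in_Lp p (F j)) \<and>
     (\<forall>j<m. \<forall>a b. 0 \<le> a \<and> a \<le> b \<longrightarrow>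
        set_integrable lborel {a..b} (F (Suc j)) \<and>
        F j b - F j a = (LINT x:{a..b}|lborel. F (Suc j) x))"

definition sobolev_norm :: "nat \<Rightarrow> real \<Rightarrow> (nat \<Rightarrow> real \<Rightarrow> real) \<Rightarrow> real" where
  "sobolev_norm m p F = (\<Sum>j\<le>m. Lp_norm p (F j))"

definition Iop :: "(nat \<Rightarrow> real \<Rightarrow> real) \<Rightarrow> real \<Rightarrow> real" where
  "Iop F x = (LINT y:{0..x}|lborel. (F 0 y - F 0 0 - y * F 1 0) / y\<^sup>2)"

end

theory Submission
  imports Defs
begin


lemma scale_set_integral:
  fixes g :: "real \<Rightarrow> real"
  assumes c: "c > 0"
  shows "(LINT x:{a..b}|lborel. g (c*x)) = (LINT u:{c*a..c*b}|lborel. g u) / c"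
proof -
  have "(LINT u:{c*a..c*b}|lborel. g u) = (\<integral>u. indicator {c*a..c*b} u * g u \<partial>lborel)"
    by (simp add: set_lebesgue_integral_def)
  also have "\<dots> = c * (\<integral>x. indicator {c*a..c*b} (c*x) * g (c*x) \<partial>lborel)"
    using lborel_integral_real_affine[of c "\<lambda>u. indicator {c*a..c*b} u * g u" 0] c by simp
  also have "(\<lambda>x. indicator {c*a..c*b} (c*x) * g (c*x)) = (\<lambda>x. indicator {a..b} x * g (c*x) :: real)"
    using c by (auto simp: fun_eq_iff indicator_def)
  finally show ?thesis using c by (simp add: set_lebesgue_integral_def)
qed

lemma scale_set_integrable:
  fixes g :: "real \<Rightarrow> real"
  assumes c: "c > 0" and "set_integrable lborel {c*a..c*b} g"
  shows "set_integrable lborel {a..b} (\<lambda>x. g (c*x))"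
proof -
  have "integrable lborel (\<lambda>x. indicator {c*a..c*b} (0 + c*x) *\<^sub>R g (0 + c*x))"
    using lborel_integrable_real_affine[of "\<lambda>u. indicator {c*a..c*b} u *\<^sub>R g u" c 0] assms
    by (simp add: set_integrable_def)
  also have "(\<lambda>x. indicator {c*a..c*b} (0 + c*x) *\<^sub>R g (0 + c*x)) = (\<lambda>x. indicator {a..b} x *\<^sub>R g (c*x))"
    using c by (auto simp: fun_eq_iff indicator_def)
  finally show ?thesis by (simp add: set_integrable_def)
qed

lemma scale_nn:
  fixes f :: "real \<Rightarrow> ennreal"
  assumes c: "c > 0" and [measurable]: "f \<in> borel_measurable borel"
  shows "(\<integral>\<^sup>+x. f x \<partial>lborel) = ennreal c * (\<integral>\<^sup>+x. f (c * x) \<partial>lborel)"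
  using nn_integral_real_affine[of f c 0] c by simp

definition acrel :: "(real \<Rightarrow> real) \<Rightarrow> (real \<Rightarrow> real) \<Rightarrow> bool" where
  "acrel \<psi> \<eta> \<longleftrightarrow> (\<forall>a b. 0 \<le> a \<and> a \<le> b \<longrightarrow> set_integrable lborel {a..b} \<eta> \<and>
      \<psi> b - \<psi> a = (LINT x:{a..b}|lborel. \<eta> x))"

lemma acrel_cont:
  assumes "acrel \<psi> \<eta>" "0 \<le> b"
  shows "continuous_on {0..b} \<psi>"
proof -
  have i: "\<eta> integrable_on {0..b}"
    using assms set_borel_integral_eq_integral(1) unfolding acrel_def by blast
  have "continuous_on {0..b} (\<lambda>x. \<psi> 0 + integral {0..x} \<eta>)"
    by (intro continuous_intros indefinite_integral_continuous_1 i)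
  moreover have "\<psi> 0 + integral {0..x} \<eta> = \<psi> x" if "x \<in> {0..b}" for x
    using assms that set_borel_integral_eq_integral(2)[of "{0..x}" \<eta>] unfolding acrel_def by force
  ultimately show ?thesis using continuous_on_cong by (metis (no_types, lifting))
qed

lemma meas0:
  fixes \<phi> :: "real \<Rightarrow> real"
  assumes "set_borel_measurable lborel {0<..} \<phi>"
  shows "(\<lambda>x. indicator {0..} x * \<phi> x :: real) \<in> borel_measurable borel"
proof -
  have [measurable]: "(\<lambda>x. indicator {0<..} x * \<phi> x :: real) \<in> borel_measurable borel"
    using assms by (simp add: set_borel_measurable_def)
  have "(\<lambda>x. indicator {0<..} x * \<phi> x + indicator {0} x * \<phi> 0 :: real) \<in> borel_measurable borel"
    by measurable
  also have "(\<lambda>x. indicator {0<..} x * \<phi> x + indicator {0} x * \<phi> 0 :: real) = (\<lambda>x. indicator {0..} x * \<phi> x)"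
    by (auto simp: fun_eq_iff split: split_indicator)
  finally show ?thesis .
qed

lemma tangent_powr:
  fixes c x p :: real
  assumes "p \<ge> 1" "c > 0" "x \<ge> 0"
  shows "x powr p \<ge> c powr p + p * c powr (p - 1) * (x - c)"
proof (cases "x = 0")
  case True
  have "c powr (p - 1) * c = c powr p" using assms by (simp add: powr_diff)
  then have "c powr p + p * c powr (p - 1) * (x - c) = c powr p * (1 - p)"
    using True by (simp add: algebra_simps)
  also have "\<dots> \<le> 0" using assms by (simp add: mult_nonneg_nonpos)
  finally show ?thesis using True by simp
next
  case False
  have d: "((\<lambda>x. x powr p) has_field_derivative p * c powr (p - 1)) (at c within {0<..})"
    using assms by (auto intro!: derivative_eq_intros)
  have "x powr p - c powr p \<ge> p * c powr (p - 1) * (x - c)"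
    by (rule convex_on_imp_above_tangent[OF powr_convex[OF assms(1)] _ _ _ d])
       (use assms False in \<open>auto simp: interior_open\<close>)
  then show ?thesis by simp
qed

lemma jensen_w:
  fixes w h :: "'a \<Rightarrow> real"
  assumes p: "p \<ge> 1" and w: "\<And>x. w x \<ge> 0" and h: "\<And>x. h x \<ge> 0"
    and iw: "integrable M w" and w1: "(\<integral>x. w x \<partial>M) = 1"
    and iwh: "integrable M (\<lambda>x. w x * h x)" and iwhp: "integrable M (\<lambda>x. w x * h x powr p)"
  shows "(\<integral>x. w x * h x \<partial>M) powr p \<le> (\<integral>x. w x * h x powr p \<partial>M)"
proof -
  define c where "c = (\<integral>x. w x * h x \<partial>M)"
  have c0: "c \<ge> 0" unfolding c_def using w h by (intro integral_nonneg_AE) auto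
  show ?thesis
  proof (cases "c = 0")
    case True
    then show ?thesis using w h p unfolding c_def[symmetric] by (auto intro!: integral_nonneg_AE)
  next
    case False
    then have cp: "c > 0" using c0 by simp
    have eqf: "(\<lambda>x. w x * (c powr p + p * c powr (p - 1) * (h x - c))) =
            (\<lambda>x. (c powr p - p * c powr (p - 1) * c) * w x + p * c powr (p - 1) * (w x * h x))"
      by (auto simp: fun_eq_iff algebra_simps)
    have "integrable M (\<lambda>x. w x * (c powr p + p * c powr (p - 1) * (h x - c)))"
      unfolding eqf using iw iwh by simp
    moreover have "w x * (c powr p + p * c powr (p - 1) * (h x - c)) \<le> w x * h x powr p" for x
      by (intro mult_left_mono tangent_powr p cp h w)
    ultimately have "(\<integral>x. w x * (c powr p + p * c powr (p - 1) * (h x - c)) \<partial>M) \<le> (\<integral>x. w x * h x powr p \<partial>M)"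
      using iwhp by (intro integral_mono) auto
    moreover have "(\<integral>x. w x * (c powr p + p * c powr (p - 1) * (h x - c)) \<partial>M)
        = (c powr p - p * c powr (p - 1) * c) * (\<integral>x. w x \<partial>M) + p * c powr (p - 1) * (\<integral>x. w x * h x \<partial>M)"
    proof -
      have "(\<lambda>x. w x * (c powr p + p * c powr (p - 1) * (h x - c))) =
            (\<lambda>x. (c powr p - p * c powr (p - 1) * c) * w x + p * c powr (p - 1) * (w x * h x))"
        by (auto simp: fun_eq_iff algebra_simps)
      then show ?thesis using iw iwh by simp
    qed
    ultimately show ?thesis using w1 unfolding c_def[symmetric] by simp
  qed
qed



definition Tw :: "nat \<Rightarrow> (real \<Rightarrow> real) \<Rightarrow> real \<Rightarrow> real" where
  "Tw j g y = (LINT s:{0..1}|lborel. (1 - s) * s ^ j * g (s * y))"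

lemma Tw_meas[measurable]:
  assumes [measurable]: "g \<in> borel_measurable borel"
  shows "Tw j g \<in> borel_measurable borel"
  unfolding Tw_def set_lebesgue_integral_def by measurable

lemma powr_01:
  fixes a :: real
  assumes a: "a > -1"
  shows "(\<integral>\<^sup>+x. ennreal (indicator {0..1} x * x powr a) \<partial>lborel) = ennreal (1 / (a + 1))"
proof -
  have "((\<lambda>x. x powr a) has_integral (1 powr (a+1) / (a+1))) {0..1}"
    by (rule has_integral_powr_from_0) (use a in auto)
  then have "integral\<^sup>N lborel (\<lambda>x. indicator {0..1} x * x powr a) = 1 / (a + 1)"
    by (intro nn_integral_has_integral_lebesgue) auto
  then show ?thesis by simp
qed

lemma powr_01_int:
  fixes a :: real
  assumes a: "a > -1"
  shows "integrable lborel (\<lambda>x. indicator {0..1} x * x powr a)"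
    and "(\<integral>x. indicator {0..1} x * x powr a \<partial>lborel) = 1 / (a + 1)"
proof -
  show i: "integrable lborel (\<lambda>x. indicator {0..1} x * x powr a)"
    by (rule integrableI_nonneg) (use powr_01[OF a] in auto)
  have "ennreal (\<integral>x. indicator {0..1} x * x powr a \<partial>lborel) = ennreal (1 / (a + 1))"
    using nn_integral_eq_integral[OF i] powr_01[OF a] by auto
  then show "(\<integral>x. indicator {0..1} x * x powr a \<partial>lborel) = 1 / (a + 1)"
    using a by (subst (asm) ennreal_inj) (auto intro!: integral_nonneg_AE)
qed

lemma abs_le_powr: "p \<ge> 1 \<Longrightarrow> \<bar>x::real\<bar> \<le> 1 + \<bar>x\<bar> powr p"
proof (cases "\<bar>x\<bar> \<le> 1")
  case False
  assume p: "p \<ge> 1"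
  have "\<bar>x\<bar> powr 1 \<le> \<bar>x\<bar> powr p" using False p by (intro powr_mono) auto
  then show ?thesis using False by simp
next
  case True
  have "0 \<le> \<bar>x\<bar> powr p" by simp
  then show ?thesis using True by linarith
qed

lemma loc_int:
  fixes \<phi> :: "real \<Rightarrow> real"
  assumes p: "p \<ge> 1" and [measurable]: "\<phi> \<in> borel_measurable borel"
    and ip: "set_integrable lborel {0<..} (\<lambda>x. \<bar>\<phi> x\<bar> powr p)"
  shows "set_integrable lborel {0..b} \<phi>"
proof -
  have i1: "integrable lborel (\<lambda>x. indicator {0<..b} x * (\<bar>\<phi> x\<bar> powr p))"
  proof -
    have "set_integrable lborel {0<..b} (\<lambda>x. \<bar>\<phi> x\<bar> powr p)"
      by (rule set_integrable_subset[OF ip]) auto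
    then show ?thesis by (simp add: set_integrable_def)
  qed
  have i2: "integrable lborel (\<lambda>x. indicator {0<..b} x :: real)"
  proof (cases "0 \<le> b")
    case False
    then have "{0<..b} = ({}::real set)" by auto
    then show ?thesis by simp
  qed (intro integrable_real_indicator; simp)
  have "integrable lborel (\<lambda>x. indicator {0<..b} x * (1 + \<bar>\<phi> x\<bar> powr p))"
    using Bochner_Integration.integrable_add[OF i2 i1] by (simp add: algebra_simps)
  then show ?thesis
    unfolding set_integrable_def
  proof (rule Bochner_Integration.integrable_bound)
    show "(\<lambda>x. indicator {0..b} x *\<^sub>R \<phi> x) \<in> borel_measurable lborel" by measurable
    show "AE x in lborel. norm (indicator {0..b} x *\<^sub>R \<phi> x) \<le> norm (indicator {0<..b} x * (1 + \<bar>\<phi> x\<bar> powr p))"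
      using AE_lborel_singleton[of 0]
    proof eventually_elim
      case (elim x)
      then show ?case using abs_le_powr[OF p, of "\<phi> x"]
        by (auto split: split_indicator)
    qed
  qed
qed

lemma scaled_int:
  fixes \<phi> :: "real \<Rightarrow> real"
  assumes p: "p \<ge> 1" and [measurable]: "\<phi> \<in> borel_measurable borel"
    and ip: "set_integrable lborel {0<..} (\<lambda>x. \<bar>\<phi> x\<bar> powr p)" and y: "y > 0"
  shows "set_integrable lborel {0..1} (\<lambda>s. \<phi> (s * y))"
proof -
  have "set_integrable lborel {y*0..y*1} \<phi>" using loc_int[OF p _ ip] by simp
  from scale_set_integrable[OF y this] show ?thesis by (simp add: mult.commute)
qed

lemma powr_calc:
  fixes s a p :: real
  assumes "s > 0" "a \<ge> 0"
  shows "(1/2) * s powr (-1/2) * (2 * s powr (1/2) * a) powr p = 2 powr (p - 1) * (s powr ((p - 1) / 2) * a powr p)"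
proof -
  have e1: "(2 * s powr (1/2) * a) powr p = 2 powr p * (s powr (p/2) * a powr p)"
    using assms by (simp add: powr_mult powr_powr)
  have e2: "s powr (-1/2) * s powr (p/2) = s powr ((p - 1) / 2)"
    by (simp add: powr_add[symmetric] diff_divide_distrib)
  have e3: "2 powr p = 2 * 2 powr (p - 1)"
    by (simp add: powr_diff)
  have "(1/2) * s powr (-1/2) * (2 * s powr (1/2) * a) powr p = 
     (1/2 * 2 powr p) * ((s powr (-1/2) * s powr (p/2)) * a powr p)"
    unfolding e1 by (simp only: mult_ac)
  also have "\<dots> = 2 powr (p - 1) * (s powr ((p - 1) / 2) * a powr p)"
    unfolding e2 e3 by simp
  finally show ?thesis .
qed

lemma jensen_pt:
  fixes \<phi> :: "real \<Rightarrow> real"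
  assumes p: "p > 1" and [measurable]: "\<phi> \<in> borel_measurable borel"
    and ip: "set_integrable lborel {0<..} (\<lambda>x. \<bar>\<phi> x\<bar> powr p)" and y: "y > 0"
  shows "ennreal ((LINT s:{0..1}|lborel. \<bar>\<phi> (s*y)\<bar>) powr p) \<le>
    ennreal (2 powr (p-1)) * (\<integral>\<^sup>+s. ennreal (indicator {0..1} s * (s powr ((p-1)/2) * \<bar>\<phi> (s*y)\<bar> powr p)) \<partial>lborel)"
proof -
  define g where "g s = indicator {0..1} s * (s powr ((p-1)/2) * \<bar>\<phi> (s*y)\<bar> powr p)" for s
  have [measurable]: "g \<in> borel_measurable borel" unfolding g_def by measurable
  have g0: "g s \<ge> 0" for s unfolding g_def by auto
  show ?thesis
  proof (cases "(\<integral>\<^sup>+s. ennreal (g s) \<partial>lborel) = \<infinity>")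
    case True
    have "2 powr (p - 1) > (0::real)" by simp
    then have "ennreal (2 powr (p-1)) \<noteq> 0" by simp
    then show ?thesis using True unfolding g_def by (simp add: ennreal_mult_top)
  next
    case False
    have ig: "integrable lborel g"
      by (rule integrableI_nonneg) (use False g0 in \<open>auto simp: less_top\<close>)
    have G: "(\<integral>\<^sup>+s. ennreal (g s) \<partial>lborel) = ennreal (\<integral>s. g s \<partial>lborel)"
      by (rule nn_integral_eq_integral[OF ig]) (use g0 in auto)
    define w where "w s = (1/2) * (indicator {0..1} s * s powr (-1/2))" for s :: real
    define h where "h s = 2 * s powr (1/2) * \<bar>\<phi> (s*y)\<bar>" for s
    have [measurable]: "w \<in> borel_measurable borel" "h \<in> borel_measurable borel"
      unfolding w_def h_def by measurable
    have w0: "w s \<ge> 0" for s unfolding w_def by auto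
    have h0: "h s \<ge> 0" for s unfolding h_def by auto
    have iw: "integrable lborel w" unfolding w_def using powr_01_int(1)[of "-1/2"] by simp
    have w1: "(\<integral>s. w s \<partial>lborel) = 1" unfolding w_def using powr_01_int(2)[of "-1/2"] by simp
    have ae1: "AE s in lborel. indicator {0..1} s * \<bar>\<phi> (s*y)\<bar> = w s * h s"
      using AE_lborel_singleton[of 0]
    proof eventually_elim
      case (elim s)
      show ?case
      proof (cases "s \<in> {0..1}")
        case True
        then have "s > 0" using elim by auto
        then have "s powr (-1/2) * s powr (1/2) = 1" by (simp add: powr_add[symmetric])
        then show ?thesis using True unfolding w_def h_def
          by (simp add: algebra_simps)
      qed (simp add: w_def)
    qed
    have i1: "integrable lborel (\<lambda>s. indicator {0..1} s * \<bar>\<phi> (s*y)\<bar>)"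
      using set_integrable_abs[OF scaled_int[OF _ _ ip y]] p by (simp add: set_integrable_def)
    have iwh: "integrable lborel (\<lambda>s. w s * h s)"
      by (rule integrable_cong_AE_imp[OF i1 _ ae1]) measurable
    have D: "(LINT s:{0..1}|lborel. \<bar>\<phi> (s*y)\<bar>) = (\<integral>s. w s * h s \<partial>lborel)"
      unfolding set_lebesgue_integral_def using ae1 by (intro integral_cong_AE) auto
    have eqp: "w s * h s powr p = 2 powr (p - 1) * g s" for s
    proof (cases "s \<in> {0<..1}")
      case True
      then show ?thesis unfolding w_def h_def g_def
        using powr_calc[of s "\<bar>\<phi> (s*y)\<bar>" p] by auto
    next
      case False
      then have "s \<notin> {0..1} \<or> s = 0" by auto
      then show ?thesis unfolding w_def h_def g_def by auto
    qed
    have iwhp: "integrable lborel (\<lambda>s. w s * h s powr p)"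
      unfolding eqp using ig by simp
    have "(\<integral>s. w s * h s \<partial>lborel) powr p \<le> (\<integral>s. w s * h s powr p \<partial>lborel)"
      by (rule jensen_w[OF _ w0 h0 iw w1 iwh iwhp]) (use p in auto)
    also have "\<dots> = 2 powr (p - 1) * (\<integral>s. g s \<partial>lborel)" unfolding eqp by simp
    finally have "ennreal ((LINT s:{0..1}|lborel. \<bar>\<phi> (s*y)\<bar>) powr p) \<le> ennreal (2 powr (p - 1) * (\<integral>s. g s \<partial>lborel))"
      unfolding D by (rule ennreal_leI)
    also have "\<dots> = ennreal (2 powr (p - 1)) * (\<integral>\<^sup>+s. ennreal (g s) \<partial>lborel)"
      unfolding G by (rule ennreal_mult') simp
    finally show ?thesis unfolding g_def .
  qed
qed

lemma Tw_le:
  fixes \<phi> :: "real \<Rightarrow> real"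
  assumes p: "p > 1" and [measurable]: "\<phi> \<in> borel_measurable borel"
    and ip: "set_integrable lborel {0<..} (\<lambda>x. \<bar>\<phi> x\<bar> powr p)" and y: "y > 0"
  shows "\<bar>Tw j \<phi> y\<bar> \<le> (LINT s:{0..1}|lborel. \<bar>\<phi> (s*y)\<bar>)"
proof -
  have i1: "integrable lborel (\<lambda>s. indicator {0..1} s * \<bar>\<phi> (s*y)\<bar>)"
    using set_integrable_abs[OF scaled_int[OF _ _ ip y]] p by (simp add: set_integrable_def)
  have bd: "\<bar>indicator {0..1} s * ((1 - s) * s ^ j * \<phi> (s * y))\<bar> \<le> indicator {0..1} s * \<bar>\<phi> (s*y)\<bar>" for s :: real
  proof (cases "s \<in> {0..1}")
    case True
    then have "\<bar>(1 - s) * s ^ j\<bar> \<le> 1"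
      by (auto simp: abs_mult intro!: mult_le_one power_le_one)
    then have "\<bar>(1 - s) * s ^ j * \<phi> (s * y)\<bar> \<le> 1 * \<bar>\<phi> (s*y)\<bar>"
      unfolding abs_mult[of _ "\<phi> (s * y)"] by (intro mult_right_mono) auto
    then show ?thesis using True by simp
  qed simp
  have i2: "integrable lborel (\<lambda>s. indicator {0..1} s * ((1 - s) * s ^ j * \<phi> (s * y)))"
    by (rule Bochner_Integration.integrable_bound[OF i1]) (use bd in auto)
  have "\<bar>Tw j \<phi> y\<bar> \<le> (\<integral>s. \<bar>indicator {0..1} s * ((1 - s) * s ^ j * \<phi> (s * y))\<bar> \<partial>lborel)"
    unfolding Tw_def set_lebesgue_integral_def by (simp add: integral_abs_bound)
  also have "\<dots> \<le> (\<integral>s. indicator {0..1} s * \<bar>\<phi> (s*y)\<bar> \<partial>lborel)"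
    by (rule integral_mono[OF _ i1 bd]) (use i2 in simp)
  finally show ?thesis by (simp add: set_lebesgue_integral_def)
qed

lemma hardy:
  fixes \<phi> :: "real \<Rightarrow> real"
  assumes p: "p > 1" and [measurable]: "\<phi> \<in> borel_measurable borel"
    and ip: "set_integrable lborel {0<..} (\<lambda>x. \<bar>\<phi> x\<bar> powr p)"
  shows "set_integrable lborel {0<..} (\<lambda>y. \<bar>Tw j \<phi> y\<bar> powr p)"
    and "(LINT y:{0<..}|lborel. \<bar>Tw j \<phi> y\<bar> powr p) \<le> (2 powr p / (p - 1)) * (LINT y:{0<..}|lborel. \<bar>\<phi> y\<bar> powr p)"
proof -
  define P where "P = (LINT y:{0<..}|lborel. \<bar>\<phi> y\<bar> powr p)"
  have P0: "P \<ge> 0" unfolding P_def set_lebesgue_integral_def by (intro Bochner_Integration.integral_nonneg_AE) auto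
  have PP: "(\<integral>\<^sup>+u. ennreal (indicator {0<..} u * \<bar>\<phi> u\<bar> powr p) \<partial>lborel) = ennreal P"
  proof -
    have "integrable lborel (\<lambda>u. indicator {0<..} u * \<bar>\<phi> u\<bar> powr p)"
      using ip by (simp add: set_integrable_def)
    then show ?thesis unfolding P_def set_lebesgue_integral_def
      by (subst nn_integral_eq_integral) auto
  qed
  define g where "g y s = indicator {0..1} s * (s powr ((p-1)/2) * \<bar>\<phi> (s*y)\<bar> powr p)" for y s :: real
  have [measurable]: "(\<lambda>(y, s). g y s) \<in> borel_measurable (lborel \<Otimes>\<^sub>M lborel)"
    unfolding g_def by measurable
  have pt: "ennreal (indicator {0<..} y * \<bar>Tw j \<phi> y\<bar> powr p) \<le>
      ennreal (2 powr (p-1)) * (\<integral>\<^sup>+s. ennreal (indicator {0<..} y * g y s) \<partial>lborel)" for y :: real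
  proof (cases "y > 0")
    case True
    have "\<bar>Tw j \<phi> y\<bar> powr p \<le> (LINT s:{0..1}|lborel. \<bar>\<phi> (s*y)\<bar>) powr p"
      using Tw_le[OF p _ ip True] p by (intro powr_mono2) auto
    then have "ennreal (indicator {0<..} y * \<bar>Tw j \<phi> y\<bar> powr p) \<le> ennreal ((LINT s:{0..1}|lborel. \<bar>\<phi> (s*y)\<bar>) powr p)"
      using True by (intro ennreal_leI) simp
    also have "\<dots> \<le> ennreal (2 powr (p-1)) * (\<integral>\<^sup>+s. ennreal (g y s) \<partial>lborel)"
      unfolding g_def by (rule jensen_pt[OF p _ ip True]) simp
    finally show ?thesis using True by simp
  qed simp
  have inner: "(\<integral>\<^sup>+y. ennreal (indicator {0<..} y * g y s) \<partial>lborel) =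
      ennreal (indicator {0..1} s * s powr ((p-3)/2)) * ennreal P" for s :: real
  proof (cases "s \<in> {0<..1}")
    case True
    then have s: "s > 0" by simp
    define f where "f u = ennreal (indicator {0<..} u * \<bar>\<phi> u\<bar> powr p)" for u
    have [measurable]: "f \<in> borel_measurable borel" unfolding f_def by measurable
    have "(\<integral>\<^sup>+y. ennreal (indicator {0<..} y * g y s) \<partial>lborel) =
        (\<integral>\<^sup>+y. ennreal (s powr ((p-1)/2)) * f (s * y) \<partial>lborel)"
    proof (intro nn_integral_cong)
      fix y :: real
      have "indicator {0<..} y = (indicator {0<..} (s*y) :: real)"
        using s by (auto simp: indicator_def zero_less_mult_iff)
      then show "ennreal (indicator {0<..} y * g y s) = ennreal (s powr ((p-1)/2)) * f (s * y)"
        unfolding g_def f_def using True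
        by (simp add: ennreal_mult'[symmetric] mult_ac)
    qed
    also have "\<dots> = ennreal (s powr ((p-1)/2)) * (\<integral>\<^sup>+y. f (s * y) \<partial>lborel)"
      by (rule nn_integral_cmult) measurable
    also have "s powr ((p-1)/2) = s powr ((p-3)/2) * s"
    proof -
      have e: "(p-1)/2 = (p-3)/2 + 1" by (simp add: field_simps)
      have "s powr ((p-1)/2) = s powr ((p-3)/2) * s powr 1" unfolding e by (rule powr_add)
      then show ?thesis using s by simp
    qed
    also have "ennreal (s powr ((p-3)/2) * s) * (\<integral>\<^sup>+y. f (s * y) \<partial>lborel)
        = ennreal (s powr ((p-3)/2)) * (ennreal s * (\<integral>\<^sup>+y. f (s * y) \<partial>lborel))"
      using s by (simp add: ennreal_mult mult.assoc)
    also have "ennreal s * (\<integral>\<^sup>+y. f (s * y) \<partial>lborel) = ennreal P"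
      using scale_nn[OF s, of f] PP unfolding f_def by simp
    finally show ?thesis using True by simp
  next
    case False
    then have "s \<notin> {0..1} \<or> s = 0" by auto
    then show ?thesis unfolding g_def by auto
  qed
  have "(\<integral>\<^sup>+y. ennreal (indicator {0<..} y * \<bar>Tw j \<phi> y\<bar> powr p) \<partial>lborel) \<le>
      (\<integral>\<^sup>+y. ennreal (2 powr (p-1)) * (\<integral>\<^sup>+s. ennreal (indicator {0<..} y * g y s) \<partial>lborel) \<partial>lborel)"
    by (intro nn_integral_mono pt)
  also have "\<dots> = ennreal (2 powr (p-1)) * (\<integral>\<^sup>+y. (\<integral>\<^sup>+s. ennreal (indicator {0<..} y * g y s) \<partial>lborel) \<partial>lborel)"
    by (rule nn_integral_cmult) measurable
  also have "(\<integral>\<^sup>+y. (\<integral>\<^sup>+s. ennreal (indicator {0<..} y * g y s) \<partial>lborel) \<partial>lborel)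
      = (\<integral>\<^sup>+s. (\<integral>\<^sup>+y. ennreal (indicator {0<..} y * g y s) \<partial>lborel) \<partial>lborel)"
    by (rule lborel_pair.Fubini'[symmetric]) measurable
  also have "\<dots> = (\<integral>\<^sup>+s. ennreal (indicator {0..1} s * s powr ((p-3)/2)) * ennreal P \<partial>lborel)"
    unfolding inner ..
  also have "\<dots> = (\<integral>\<^sup>+s. ennreal (indicator {0..1} s * s powr ((p-3)/2)) \<partial>lborel) * ennreal P"
    by (rule nn_integral_multc) measurable
  also have "\<dots> = ennreal (1 / ((p-3)/2 + 1)) * ennreal P"
    using p by (subst powr_01) auto
  also have "1 / ((p-3)/2 + 1) = 2 / (p - 1)" using p by (simp add: field_simps)
  finally have A: "(\<integral>\<^sup>+y. ennreal (indicator {0<..} y * \<bar>Tw j \<phi> y\<bar> powr p) \<partial>lborel)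
      \<le> ennreal (2 powr p / (p - 1) * P)"
  proof -
    assume h: "(\<integral>\<^sup>+y. ennreal (indicator {0<..} y * \<bar>Tw j \<phi> y\<bar> powr p) \<partial>lborel)
      \<le> ennreal (2 powr (p-1)) * (ennreal (2 / (p - 1)) * ennreal P)"
    have "2 powr (p-1) * (2 / (p-1)) = 2 powr p / (p - 1)"
      by (simp add: powr_diff)
    then have "ennreal (2 powr (p-1)) * (ennreal (2 / (p - 1)) * ennreal P) = ennreal (2 powr p / (p - 1) * P)"
      using p P0 by (simp add: ennreal_mult[symmetric] mult.assoc)
    then show ?thesis using h by simp
  qed
  have int: "integrable lborel (\<lambda>y. indicator {0<..} y * \<bar>Tw j \<phi> y\<bar> powr p)"
    by (rule integrableI_nonneg) (use A in \<open>auto simp: less_top[symmetric] top_unique\<close>)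
  then show "set_integrable lborel {0<..} (\<lambda>y. \<bar>Tw j \<phi> y\<bar> powr p)"
    by (simp add: set_integrable_def)
  have "ennreal (LINT y:{0<..}|lborel. \<bar>Tw j \<phi> y\<bar> powr p) = (\<integral>\<^sup>+y. ennreal (indicator {0<..} y * \<bar>Tw j \<phi> y\<bar> powr p) \<partial>lborel)"
    unfolding set_lebesgue_integral_def using int by (subst nn_integral_eq_integral) auto
  also note A
  finally show "(LINT y:{0<..}|lborel. \<bar>Tw j \<phi> y\<bar> powr p) \<le> (2 powr p / (p - 1)) * (LINT y:{0<..}|lborel. \<bar>\<phi> y\<bar> powr p)"
    unfolding P_def using p P0 by (subst (asm) ennreal_le_iff) (auto simp: P_def)
qed

lemma prod_integrable:
  fixes F :: "real \<times> real \<Rightarrow> real"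
  assumes [measurable]: "F \<in> borel_measurable (lborel \<Otimes>\<^sub>M lborel)"
    and bd: "\<And>s. (\<integral>\<^sup>+y. ennreal \<bar>F (s,y)\<bar> \<partial>lborel) \<le> B * indicator {0..c} s"
    and B: "B < \<infinity>"
  shows "integrable (lborel \<Otimes>\<^sub>M lborel) F"
proof (rule integrableI_bounded)
  have "(\<integral>\<^sup>+x. ennreal (norm (F x)) \<partial>(lborel \<Otimes>\<^sub>M lborel)) =
      (\<integral>\<^sup>+s. (\<integral>\<^sup>+y. ennreal \<bar>F (s,y)\<bar> \<partial>lborel) \<partial>lborel)"
    by (subst lborel.nn_integral_fst[symmetric]) auto
  also have "\<dots> \<le> (\<integral>\<^sup>+s. B * indicator {0..c} s \<partial>lborel)"
    by (intro nn_integral_mono bd)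
  also have "\<dots> = B * emeasure lborel {0..c}" by (rule nn_integral_cmult_indicator) simp
  also have "\<dots> < \<infinity>"
  proof (cases "0 \<le> c")
    case True then show ?thesis using B by (simp add: ennreal_mult_less_top)
  next
    case False then have "{0..c} = ({}::real set)" by auto
    then show ?thesis by simp
  qed
  finally show "(\<integral>\<^sup>+x. ennreal (norm (F x)) \<partial>(lborel \<Otimes>\<^sub>M lborel)) < \<infinity>" .
qed simp

lemma L1:
  fixes \<psi> \<eta> :: "real \<Rightarrow> real"
  assumes ac: "acrel \<psi> \<eta>" and [measurable]: "\<eta> \<in> borel_measurable borel"
  shows "acrel (Tw j \<psi>) (Tw (Suc j) \<eta>)"
  unfolding acrel_def
proof (intro allI impI)
  fix a b :: real assume ab: "0 \<le> a \<and> a \<le> b"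
  define K where "K s y = indicator {0..1} s * indicator {a..b} y * ((1 - s) * s ^ Suc j*\<eta>(s*y))" for s y :: real
  have Km[measurable]: "(\<lambda>(s,y). K s y) \<in> borel_measurable (lborel \<Otimes>\<^sub>M lborel)"
    unfolding K_def by measurable
  define B where "B = (\<integral>\<^sup>+u. ennreal (indicator {0..b} u * \<bar>\<eta> u\<bar>) \<partial>lborel)"
  have B: "B < \<infinity>"
  proof -
    have "set_integrable lborel {0..b} \<eta>" using ac ab unfolding acrel_def by auto
    then have "integrable lborel (\<lambda>u. indicator {0..b} u * \<bar>\<eta> u\<bar>)"
      using set_integrable_abs by (force simp: set_integrable_def)
    then show ?thesis unfolding B_def by (simp add: integrable_iff_bounded)
  qed
  have bd: "(\<integral>\<^sup>+y. ennreal \<bar>K s y\<bar> \<partial>lborel) \<le> B * indicator {0..1} s" for s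
  proof (cases "s \<in> {0<..1}")
    case True
    then have s: "s > 0" "s \<le> 1" by auto
    define f where "f u = ennreal (indicator {s*a..s*b} u * \<bar>\<eta> u\<bar>)" for u
    have [measurable]: "f \<in> borel_measurable borel" unfolding f_def by measurable
    have "(\<integral>\<^sup>+y. ennreal \<bar>K s y\<bar> \<partial>lborel) = (\<integral>\<^sup>+y. ennreal ((1 - s) * s ^ Suc j) * f (s*y) \<partial>lborel)"
    proof (intro nn_integral_cong)
      fix y :: real
      have "indicator {a..b} y = (indicator {s*a..s*b} (s*y) :: real)"
        using s by (auto simp: indicator_def)
      then show "ennreal \<bar>K s y\<bar> = ennreal ((1 - s) * s ^ Suc j) * f (s*y)"
        unfolding K_def f_def using s
        by (simp add: ennreal_mult'[symmetric] abs_mult mult_ac)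
    qed
    also have "\<dots> = ennreal ((1 - s) * s ^ Suc j) * (\<integral>\<^sup>+y. f (s*y) \<partial>lborel)"
      by (rule nn_integral_cmult) measurable
    also have "\<dots> = ennreal ((1 - s) * s ^ j) * (ennreal s * (\<integral>\<^sup>+y. f (s*y) \<partial>lborel))"
    proof -
      have n: "0 \<le> (1 - s) * s ^ j" using s by simp
      have "(1 - s) * s ^ Suc j = ((1 - s) * s ^ j) * s" by (simp add: mult_ac)
      then have "ennreal ((1 - s) * s ^ Suc j) = ennreal ((1 - s) * s ^ j) * ennreal s"
        using n s by (simp only: ennreal_mult)
      then show ?thesis by (simp add: mult.assoc)
    qed
    also have "ennreal s * (\<integral>\<^sup>+y. f (s*y) \<partial>lborel) = (\<integral>\<^sup>+u. f u \<partial>lborel)"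
      using scale_nn[OF s(1), of f] by simp
    finally have e: "(\<integral>\<^sup>+y. ennreal \<bar>K s y\<bar> \<partial>lborel) = ennreal ((1 - s) * s ^ j) * (\<integral>\<^sup>+u. f u \<partial>lborel)" .
    have fB: "(\<integral>\<^sup>+u. f u \<partial>lborel) \<le> B"
    proof -
      have h1: "0 \<le> s*a" using s ab by simp
      have h2: "s*b \<le> b" using s ab by (simp add: mult_left_le_one_le)
      show ?thesis unfolding B_def f_def using h1 h2
        by (intro nn_integral_mono) (auto simp: indicator_def)
    qed
    have "ennreal ((1 - s) * s ^ j) \<le> 1"
      using s by (auto intro!: mult_le_one power_le_one)
    then have "ennreal ((1 - s) * s ^ j) * (\<integral>\<^sup>+u. f u \<partial>lborel) \<le> 1 * B"
      using fB by (intro mult_mono) auto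
    then show ?thesis using s e by simp
  next
    case False
    then have "s \<notin> {0..1} \<or> s = 0" by auto
    then have "K s y = 0" for y unfolding K_def by auto
    then show ?thesis by simp
  qed
  have Kint: "integrable (lborel \<Otimes>\<^sub>M lborel) (\<lambda>(s,y). K s y)"
    by (rule prod_integrable[OF Km _ B]) (use bd in simp)
  have cb: "continuous_on {0..b} \<psi>" using acrel_cont[OF ac] ab by auto
  have ca: "continuous_on {0..a} \<psi>" using acrel_cont[OF ac] ab by auto
  have ib: "set_integrable lborel {0..1} (\<lambda>s. (1 - s) * s ^ j * \<psi> (s * b))"
    by (intro borel_integrable_atLeastAtMost' continuous_intros continuous_on_compose2[OF cb])
       (use ab in \<open>auto intro!: mult_left_le_one_le\<close>)
  have ia: "set_integrable lborel {0..1} (\<lambda>s. (1 - s) * s ^ j * \<psi> (s * a))"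
    by (intro borel_integrable_atLeastAtMost' continuous_intros continuous_on_compose2[OF ca])
       (use ab in \<open>auto intro!: mult_left_le_one_le\<close>)
  have in_s: "(\<integral>y. K s y \<partial>lborel) = indicator {0..1} s * ((1 - s) * s ^ j * \<psi> (s * b) - (1 - s) * s ^ j * \<psi> (s * a))" for s
  proof (cases "s \<in> {0<..1}")
    case True
    then have s: "s > 0" "s \<le> 1" by auto
    have "(\<integral>y. K s y \<partial>lborel) = (1 - s) * s ^ Suc j * (LINT y:{a..b}|lborel. \<eta> (s*y))"
      unfolding K_def set_lebesgue_integral_def using s by (simp add: mult_ac)
    also have "(LINT y:{a..b}|lborel. \<eta> (s*y)) = (LINT u:{s*a..s*b}|lborel. \<eta> u) / s"
      by (rule scale_set_integral[OF s(1)])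
    also have "(LINT u:{s*a..s*b}|lborel. \<eta> u) = \<psi> (s*b) - \<psi> (s*a)"
      using ac ab s unfolding acrel_def by (metis mult_left_mono mult_nonneg_nonneg less_imp_le)
    finally have e: "(\<integral>y. K s y \<partial>lborel) = (1 - s) * s ^ Suc j * ((\<psi> (s*b) - \<psi> (s*a)) / s)" .
    have "(1 - s) * s ^ Suc j * ((\<psi> (s*b) - \<psi> (s*a)) / s) = (1 - s) * s ^ j * (\<psi> (s*b) - \<psi> (s*a))"
      using s by (simp add: power_Suc)
    then show ?thesis using e s by (simp add: algebra_simps)
  next
    case False
    then have "s \<notin> {0..1} \<or> s = 0" by auto
    then show ?thesis unfolding K_def by auto
  qed
  have in_y: "(\<integral>s. K s y \<partial>lborel) = indicator {a..b} y * Tw (Suc j) \<eta> y" for y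
  proof -
    have "(\<lambda>s. K s y) = (\<lambda>s. indicator {a..b} y * (indicator {0..1} s * ((1 - s) * s ^ Suc j * \<eta> (s * y))))"
      by (auto simp: K_def fun_eq_iff mult_ac)
    then show ?thesis unfolding Tw_def set_lebesgue_integral_def by simp
  qed
  have "(\<integral>y. (\<integral>s. K s y \<partial>lborel) \<partial>lborel) = (\<integral>s. (\<integral>y. K s y \<partial>lborel) \<partial>lborel)"
    by (rule lborel_pair.Fubini_integral) (use Kint in simp)
  then have eq: "(LINT y:{a..b}|lborel. Tw (Suc j) \<eta> y) = (LINT s:{0..1}|lborel. (1 - s) * s ^ j * \<psi> (s * b) - (1 - s) * s ^ j * \<psi> (s * a))"
    unfolding in_s in_y by (simp add: set_lebesgue_integral_def)
  show "set_integrable lborel {a..b} (Tw (Suc j) \<eta>) \<and> Tw j \<psi> b - Tw j \<psi> a = (LINT x:{a..b}|lborel. Tw (Suc j) \<eta> x)"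
  proof
    show "set_integrable lborel {a..b} (Tw (Suc j) \<eta>)"
      using lborel_pair.integrable_snd[OF Kint] unfolding in_y by (simp add: set_integrable_def)
    show "Tw j \<psi> b - Tw j \<psi> a = (LINT x:{a..b}|lborel. Tw (Suc j) \<eta> x)"
    proof -
      have "Tw j \<psi> b - Tw j \<psi> a = (LINT s:{0..1}|lborel. (1 - s) * s ^ j * \<psi> (s * b) - (1 - s) * s ^ j * \<psi> (s * a))"
        unfolding Tw_def using set_integral_diff(2)[OF ib ia] by simp
      then show ?thesis using eq by simp
    qed
  qed
qed
lemma set_const_int:
  fixes c y :: real
  assumes "0 \<le> y"
  shows "integrable lborel (\<lambda>t. indicator {0..y} t * c)" "(\<integral>t. indicator {0..y} t * c \<partial>lborel) = y * c"
proof -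
  have i: "integrable lborel (\<lambda>t. indicator {0..y} t :: real)"
    using assms by (intro integrable_real_indicator) auto
  then show "integrable lborel (\<lambda>t. indicator {0..y} t * c)" by simp
  have "(\<integral>t. indicator {0..y} t \<partial>lborel) = measure lborel {0..y::real}"
    using assms by simp
  then show "(\<integral>t. indicator {0..y} t * c \<partial>lborel) = y * c" using assms by simp
qed

lemma taylor:
  fixes f f1 f2 :: "real \<Rightarrow> real"
  assumes a1: "acrel f f1" and a2: "acrel f1 f2" and [measurable]: "f2 \<in> borel_measurable borel"
    and y: "y > 0"
  shows "f y - f 0 - y * f1 0 = y^2 * Tw 0 f2 y"
proof -
  define K where "K t u = indicator {0..y} t * (indicator {0..y} u * (if u \<le> t then f2 u else 0))" for t u :: real
  have Km[measurable]: "(\<lambda>(t,u). K t u) \<in> borel_measurable (lborel \<Otimes>\<^sub>M lborel)"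
    unfolding K_def by measurable
  define B where "B = (\<integral>\<^sup>+u. ennreal (indicator {0..y} u * \<bar>f2 u\<bar>) \<partial>lborel)"
  have si2: "set_integrable lborel {0..y} f2" using a2 y unfolding acrel_def by auto
  have B: "B < \<infinity>"
  proof -
    have "integrable lborel (\<lambda>u. indicator {0..y} u * \<bar>f2 u\<bar>)"
      using set_integrable_abs[OF si2] by (force simp: set_integrable_def)
    then show ?thesis unfolding B_def by (simp add: integrable_iff_bounded)
  qed
  have bd: "(\<integral>\<^sup>+u. ennreal \<bar>K t u\<bar> \<partial>lborel) \<le> B * indicator {0..y} t" for t
  proof (cases "t \<in> {0..y}")
    case True
    have "(\<integral>\<^sup>+u. ennreal \<bar>K t u\<bar> \<partial>lborel) \<le> B"
      unfolding B_def K_def using True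
      by (intro nn_integral_mono) (auto simp: indicator_def)
    then show ?thesis using True by simp
  qed (simp add: K_def)
  have Kint: "integrable (lborel \<Otimes>\<^sub>M lborel) (\<lambda>(t,u). K t u)"
    by (rule prod_integrable[OF Km _ B]) (use bd in simp)
  have in_u: "(\<integral>u. K t u \<partial>lborel) = indicator {0..y} t * (f1 t - f1 0)" for t
  proof (cases "t \<in> {0..y}")
    case True
    have "(\<lambda>u. K t u) = (\<lambda>u. indicator {0..t} u * f2 u)"
      using True by (auto simp: K_def fun_eq_iff indicator_def)
    then have "(\<integral>u. K t u \<partial>lborel) = (LINT u:{0..t}|lborel. f2 u)"
      by (simp add: set_lebesgue_integral_def)
    also have "\<dots> = f1 t - f1 0" using a2 True unfolding acrel_def by auto
    finally show ?thesis using True by simp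
  qed (simp add: K_def)
  have in_t: "(\<integral>t. K t u \<partial>lborel) = indicator {0..y} u * (f2 u * (y - u))" for u
  proof (cases "u \<in> {0..y}")
    case True
    have "(\<lambda>t. K t u) = (\<lambda>t. indicator {u..y} t * f2 u)"
      using True by (auto simp: K_def fun_eq_iff indicator_def)
    moreover have "(\<integral>t. indicator {u..y} t \<partial>lborel) = measure lborel {u..y}"
      by simp
    ultimately show ?thesis using True by simp
  qed (simp add: K_def)
  have "(\<integral>u. (\<integral>t. K t u \<partial>lborel) \<partial>lborel) = (\<integral>t. (\<integral>u. K t u \<partial>lborel) \<partial>lborel)"
    by (rule lborel_pair.Fubini_integral) (use Kint in simp)
  then have E: "(\<integral>u. indicator {0..y} u * (f2 u * (y - u)) \<partial>lborel) = (\<integral>t. indicator {0..y} t * (f1 t - f1 0) \<partial>lborel)"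
    unfolding in_u in_t .
  have si1: "integrable lborel (\<lambda>t. indicator {0..y} t * f1 t)"
    using a1 y unfolding acrel_def set_integrable_def by auto
  have "(\<integral>t. indicator {0..y} t * (f1 t - f1 0) \<partial>lborel) =
      (\<integral>t. indicator {0..y} t * f1 t \<partial>lborel) - (\<integral>t. indicator {0..y} t * f1 0 \<partial>lborel)"
    using si1 set_const_int(1)[of y "f1 0"] y
    by (subst Bochner_Integration.integral_diff[symmetric]) (auto simp: algebra_simps)
  also have "(\<integral>t. indicator {0..y} t * f1 t \<partial>lborel) = f y - f 0"
    using a1 y unfolding acrel_def set_lebesgue_integral_def by auto
  also have "(\<integral>t. indicator {0..y} t * f1 0 \<partial>lborel) = y * f1 0"
    using set_const_int(2) y by simp
  finally have E2: "(LINT u:{0..y}|lborel. f2 u * (y - u)) = f y - f 0 - y * f1 0"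
    using E by (simp add: set_lebesgue_integral_def)
  have "(LINT s:{0..1}|lborel. f2 (y * s) * (y - y * s)) = (LINT u:{y*0..y*1}|lborel. f2 u * (y - u)) / y"
    by (rule scale_set_integral[OF y, where g="\<lambda>u. f2 u * (y - u)"])
  also have "(LINT s:{0..1}|lborel. f2 (y * s) * (y - y * s)) = y * Tw 0 f2 y"
  proof -
    have "(\<lambda>s. indicator {0..1} s * (f2 (y * s) * (y - y * s))) = (\<lambda>s. y * (indicator {0..1} s * ((1 - s) * s ^ 0 * f2 (s * y))))"
      by (auto simp: fun_eq_iff algebra_simps)
    then show ?thesis unfolding Tw_def set_lebesgue_integral_def by simp
  qed
  finally have "y * Tw 0 f2 y = (f y - f 0 - y * f1 0) / y" using E2 by simp
  then show ?thesis using y by (simp add: field_simps power2_eq_square)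
qed
lemma acrel_eta:
  assumes "acrel \<psi> \<eta>"
  shows "acrel \<psi> (\<lambda>x. indicator {0..} x * \<eta> x)"
  unfolding acrel_def
proof (intro allI impI)
  fix a b :: real assume ab: "0 \<le> a \<and> a \<le> b"
  have eq: "(\<lambda>x. indicator {a..b} x *\<^sub>R (indicator {0..} x * \<eta> x)) = (\<lambda>x. indicator {a..b} x *\<^sub>R \<eta> x)"
    using ab by (auto simp: fun_eq_iff indicator_def)
  show "set_integrable lborel {a..b} (\<lambda>x. indicator {0..} x * \<eta> x) \<and>
        \<psi> b - \<psi> a = (LINT x:{a..b}|lborel. indicator {0..} x * \<eta> x)"
    using assms ab unfolding acrel_def set_integrable_def set_lebesgue_integral_def eq by auto
qed

lemma acrel_psi:
  assumes "acrel \<psi> \<eta>"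
  shows "acrel (\<lambda>x. indicator {0..} x * \<psi> x) \<eta>"
  using assms unfolding acrel_def by auto

lemma Tw_cong0:
  assumes "y \<ge> 0"
  shows "Tw j (\<lambda>x. indicator {0..} x * g x) y = Tw j g y"
  unfolding Tw_def set_lebesgue_integral_def
  using assms by (intro Bochner_Integration.integral_cong) (auto simp: indicator_def)

lemma Lp_cong0:
  fixes g :: "real \<Rightarrow> real"
  shows "(\<lambda>x. indicator {0<..} x *\<^sub>R \<bar>indicator {0..} x * g x\<bar> powr p) = (\<lambda>x. indicator {0<..} x *\<^sub>R \<bar>g x\<bar> powr p)"
  by (auto simp: fun_eq_iff indicator_def)

theorem lemma2p4:
  fixes k :: nat and p :: real
  assumes "1 < p"
  shows "\<exists>C>0. \<forall>F. sobolev (k + 2) p F \<longrightarrow>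
           (\<exists>H. sobolev k p H \<and>
                 (\<forall>x>0. (Iop F has_real_derivative H 0 x) (at x)) \<and>
                 sobolev_norm k p H \<le> C * sobolev_norm k p (\<lambda>j. F (j + 2)) \<and>
                 C * sobolev_norm k p (\<lambda>j. F (j + 2)) \<le> C * sobolev_norm (k + 2) p F)"
proof -
  have p: "p > 1" by fact
  define K where "K = 2 powr p / (p - 1)"
  define c where "c = K powr (1/p)"
  have Kpos: "K > 0" unfolding K_def using p by simp
  then have cpos: "c > 0" unfolding c_def by simp
  show ?thesis
  proof (intro exI[of _ c] conjI allI impI cpos)
    fix F assume sob: "sobolev (k + 2) p F"
    have Lp: "in_Lp p (F j)" if "j \<le> k + 2" for j using sob that by (simp add: sobolev_def)
    have rel: "acrel (F j) (F (Suc j))" if "j < k + 2" for j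
      using sob that unfolding sobolev_def acrel_def by blast
    define G where "G j = (\<lambda>x. indicator {0..} x * F j x)" for j
    have Gm[measurable]: "G j \<in> borel_measurable borel" if "j \<le> k + 2" for j
      unfolding G_def using Lp[OF that] by (intro meas0) (simp add: in_Lp_def)
    have Gp: "set_integrable lborel {0<..} (\<lambda>x. \<bar>G j x\<bar> powr p)" if "j \<le> k + 2" for j
      using Lp[OF that] unfolding G_def in_Lp_def set_integrable_def Lp_cong0 by simp
    have GL: "(LINT x:{0<..}|lborel. \<bar>G j x\<bar> powr p) = (LINT x:{0<..}|lborel. \<bar>F j x\<bar> powr p)" for j
      unfolding G_def set_lebesgue_integral_def Lp_cong0 ..
    define H where "H j = Tw j (G (j + 2))" for j
    have Hm[measurable]: "H j \<in> borel_measurable borel" if "j \<le> k" for j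
      unfolding H_def using that by (intro Tw_meas Gm) simp
    have Hp: "set_integrable lborel {0<..} (\<lambda>y. \<bar>H j y\<bar> powr p)" if "j \<le> k" for j
      unfolding H_def by (rule hardy(1)[OF p Gm Gp]) (use that in simp_all)
    have Hb: "(LINT y:{0<..}|lborel. \<bar>H j y\<bar> powr p) \<le> K * (LINT y:{0<..}|lborel. \<bar>F (j + 2) y\<bar> powr p)"
      if "j \<le> k" for j
      unfolding H_def K_def GL[symmetric] by (rule hardy(2)[OF p Gm Gp]) (use that in simp_all)
    have Hrel: "acrel (H j) (H (Suc j))" if "j < k" for j
    proof -
      have "acrel (G (j + 2)) (G (Suc (j + 2)))"
        unfolding G_def using that by (intro acrel_psi acrel_eta rel) simp
      from L1[OF this Gm, of j] show ?thesis unfolding H_def using that by simp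
    qed
    have sobH: "sobolev k p H"
    proof -
      have "\<forall>j\<le>k. in_Lp p (H j)"
        using Hp Hm unfolding in_Lp_def set_borel_measurable_def by simp
      moreover have "\<forall>j<k. acrel (H j) (H (Suc j))" using Hrel by blast
      ultimately show ?thesis unfolding sobolev_def acrel_def by blast
    qed
    have deriv: "(Iop F has_real_derivative H 0 x) (at x)" if x: "x > 0" for x
    proof -
      define q where "q y = (F 0 y - F 0 0 - y * F 1 0) / y\<^sup>2" for y
      define q0 where "q0 y = (G 0 y - F 0 0 - y * F 1 0) / y\<^sup>2" for y
      have [measurable]: "q0 \<in> borel_measurable borel" unfolding q0_def by measurable
      have a01: "acrel (F 0) (F 1)" using rel[of 0] by simp
      have "acrel (F 1) (F (Suc 1))" by (rule rel) simp
      then have "acrel (F 1) (F 2)" by (simp only: Suc_1)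
      then have a12: "acrel (F 1) (G 2)" unfolding G_def by (rule acrel_eta)
      have qH: "q y = H 0 y" if "y > 0" for y
        using taylor[OF a01 a12 Gm that] that unfolding q_def H_def by (simp add: field_simps numeral_2_eq_2)
      have qq0: "indicator {0..z} u * q u = indicator {0..z} u * q0 u" for z u :: real
        unfolding q_def q0_def G_def by (auto simp: indicator_def)
      have qint: "set_integrable lborel {0..z} q" if "z \<ge> 0" for z
      proof -
        have "set_integrable lborel {0..z} (H 0)" using loc_int[OF _ Hm Hp] p by simp
        then have i0: "integrable lborel (\<lambda>u. indicator {0..z} u *\<^sub>R H 0 u)"
          unfolding set_integrable_def .
        have ae: "AE u in lborel. indicator {0..z} u *\<^sub>R H 0 u = indicator {0..z} u * q0 u"
          using AE_lborel_singleton[of 0]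
        proof eventually_elim
          case (elim u)
          then show ?case using qH[of u] qq0[of z u] by (cases "u \<in> {0..z}") auto
        qed
        have "integrable lborel (\<lambda>u. indicator {0..z} u * q0 u)"
          by (rule integrable_cong_AE_imp[OF i0 _ ae]) measurable
        moreover have "(\<lambda>u. indicator {0..z} u * q u) = (\<lambda>u. indicator {0..z} u * q0 u)"
          using qq0 by blast
        ultimately show ?thesis unfolding set_integrable_def by simp
      qed
      have Iop_eq: "Iop F z = integral {0..z} q" if "z \<ge> 0" for z
        unfolding Iop_def q_def[symmetric] using set_borel_integral_eq_integral(2)[OF qint[OF that]] .
      have Fc: "isCont (F 0) x"
      proof -
        have "continuous_on {0..2*x} (F 0)" using acrel_cont[OF a01] x by simp
        then show ?thesis by (rule continuous_on_interior) (use x in simp)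
      qed
      have qc: "isCont q x" unfolding q_def by (intro continuous_intros Fc) (use x in simp)
      have qi: "q integrable_on {0..2*x}" using set_borel_integral_eq_integral(1)[OF qint] x by simp
      have "((\<lambda>u. integral {0..u} q) has_vector_derivative q x) (at x within ({0..2*x} - {}))"
        by (rule integral_has_vector_derivative_continuous_at[OF qi])
           (use x qc in \<open>auto intro: continuous_at_imp_continuous_at_within\<close>)
      moreover have "at x within {0..2*x} = at x" by (rule at_within_interior) (use x in simp)
      ultimately have "((\<lambda>u. integral {0..u} q) has_real_derivative q x) (at x)"
        by (simp add: has_real_derivative_iff_has_vector_derivative)
      then have "(Iop F has_real_derivative q x) (at x)"
        by (rule has_field_derivative_transform_within_open[where S="{0<..}"]) (use x Iop_eq in auto)
      then show ?thesis using qH[OF x] by simp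
    qed
    have Ln0: "Lp_norm p g \<ge> 0" for g unfolding Lp_norm_def by simp
    have Hn: "Lp_norm p (H j) \<le> c * Lp_norm p (F (j + 2))" if "j \<le> k" for j
    proof -
      have A0: "0 \<le> (LINT y:{0<..}|lborel. \<bar>H j y\<bar> powr p)"
        unfolding set_lebesgue_integral_def by (intro Bochner_Integration.integral_nonneg_AE) auto
      have B0: "0 \<le> (LINT y:{0<..}|lborel. \<bar>F (j + 2) y\<bar> powr p)"
        unfolding set_lebesgue_integral_def by (intro Bochner_Integration.integral_nonneg_AE) auto
      have "Lp_norm p (H j) \<le> (K * (LINT y:{0<..}|lborel. \<bar>F (j + 2) y\<bar> powr p)) powr (1/p)"
        unfolding Lp_norm_def using Hb[OF that] A0 p by (intro powr_mono2) auto
      also have "\<dots> = c * Lp_norm p (F (j + 2))"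
        unfolding c_def Lp_norm_def using Kpos B0 by (simp add: powr_mult)
      finally show ?thesis .
    qed
    have N1: "sobolev_norm k p H \<le> c * sobolev_norm k p (\<lambda>j. F (j + 2))"
      unfolding sobolev_norm_def sum_distrib_left by (intro sum_mono Hn) simp
    have "(\<Sum>j\<le>k. Lp_norm p (F (j + 2))) \<le> (\<Sum>j\<le>k + 2. Lp_norm p (F j))"
    proof -
      have "(\<Sum>j\<le>k + 2. Lp_norm p (F j)) = Lp_norm p (F 0) + (Lp_norm p (F 1) + (\<Sum>j\<le>k. Lp_norm p (F (j + 2))))"
        by (simp add: sum.atMost_Suc_shift del: sum.atMost_Suc)
      then show ?thesis using Ln0[of "F 0"] Ln0[of "F 1"] by simp
    qed
    then have N2: "c * sobolev_norm k p (\<lambda>j. F (j + 2)) \<le> c * sobolev_norm (k + 2) p F"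
      unfolding sobolev_norm_def using cpos by (intro mult_left_mono) auto
    show "\<exists>H. sobolev k p H \<and> (\<forall>x>0. (Iop F has_real_derivative H 0 x) (at x)) \<and>
            sobolev_norm k p H \<le> c * sobolev_norm k p (\<lambda>j. F (j + 2)) \<and>
            c * sobolev_norm k p (\<lambda>j. F (j + 2)) \<le> c * sobolev_norm (k + 2) p F"
      using sobH deriv N1 N2 by blast
  qed
qed

end
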